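(* Let $A$ be a von Neumann algebra and let $F\subseteq\Sigma^\ast$ be an irreducible closed set (whenever $F=F_1\cup F_2$ with $F_1,F_2$ closed, $F=F_1$ or $F=F_2$). Suppose there is $C\in\mathcal V(A)$ with $F_C\neq\emptyset$ and $F_D=\emptyset$ for all $D\in\mathcal V(A)$ with $D\subsetneq C$. Then there is a unique $\lambda\in\Sigma_C$ such that $F$ is the closure of the point $(C,\lambda)$ in $\Sigma^\ast$.
   Context: Let $A$ be a von Neumann algebra. $\mathcal{V}(A)$ denotes the set of abelian von Neumann subalgebras $C\subseteq A$ containing the unit of $A$, partially ordered by inclusion. For $C\in\mathcal V(A)$, $\Sigma_C$ denotes the Gelfand spectrum of $C$, with restriction maps $\lambda\mapsto\lambda|_D$ for $D\subseteq C$. Let $\Sigma=\{(C,\lambda)\mid C\in\mathcal V(A),\lambda\in\Sigma_C\}$ and $U_C=\{\lambda\mid(C,\lambda)\in U\}$ for $U\subseteq\Sigma$. The space $\Sigma^\ast$ is $\Sigma$ with the topology in which $U$ is open iff (1) each $U_C$ is open in $\Sigma_C$ and (2) $\lambda\in U_C$, $D\subseteq C$ imply $\lambda|_D\in U_D$. *)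

theory Defs
  imports "HOL-Analysis.Analysis"
begin

class cvector = real_vector +
  fixes cscale :: "complex \<Rightarrow> 'a \<Rightarrow> 'a"
  assumes cscale_add_right: "cscale a (x + y) = cscale a x + cscale a y"
    and cscale_add_left: "cscale (a + b) x = cscale a x + cscale b x"
    and cscale_cscale: "cscale a (cscale b x) = cscale (a * b) x"
    and cscale_one: "cscale 1 x = x"
    and scaleR_cscale: "scaleR r x = cscale (complex_of_real r) x"

class cinner_space = cvector + real_normed_vector +
  fixes cinner :: "'a \<Rightarrow> 'a \<Rightarrow> complex"
  assumes cinner_conj_sym: "cinner x y = cnj (cinner y x)"
    and cinner_add_right: "cinner x (y + z) = cinner x y + cinner x z"
    and cinner_cscale_right: "cinner x (cscale c y) = c * cinner x y"
    and cinner_nonneg: "0 \<le> Re (cinner x x)"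
    and cinner_eq_zero_iff: "cinner x x = 0 \<longleftrightarrow> x = 0"
    and norm_eq_sqrt_cinner: "norm x = sqrt (Re (cinner x x))"

class chilbert_space = cinner_space + complete_space

definition bounded_clinear :: "('h::chilbert_space \<Rightarrow> 'h) \<Rightarrow> bool" where
  "bounded_clinear T \<longleftrightarrow>
     (\<forall>x y. T (x + y) = T x + T y) \<and> (\<forall>c x. T (cscale c x) = cscale c (T x)) \<and>
     (\<exists>K. \<forall>x. norm (T x) \<le> norm x * K)"

definition adjoint :: "('h::chilbert_space \<Rightarrow> 'h) \<Rightarrow> ('h \<Rightarrow> 'h)" where
  "adjoint T = (SOME S. \<forall>x y. cinner (T x) y = cinner x (S y))"

definition commutant :: "('h::chilbert_space \<Rightarrow> 'h) set \<Rightarrow> ('h \<Rightarrow> 'h) set" where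
  "commutant S = {T. bounded_clinear T \<and> (\<forall>s\<in>S. T \<circ> s = s \<circ> T)}"

text \<open>A von Neumann algebra on H: a self-adjoint set of bounded operators equal to its
  bicommutant (equivalently, by the double commutant theorem, a weakly closed unital
  *-subalgebra of B(H)).\<close>
definition von_neumann_algebra :: "('h::chilbert_space \<Rightarrow> 'h) set \<Rightarrow> bool" where
  "von_neumann_algebra M \<longleftrightarrow>
     M \<subseteq> Collect bounded_clinear \<and> (\<forall>T\<in>M. adjoint T \<in> M) \<and> commutant (commutant M) = M"

definition abelian_subalgebras :: "('h::chilbert_space \<Rightarrow> 'h) set \<Rightarrow> ('h \<Rightarrow> 'h) set set" where
  "abelian_subalgebras A =
     {C. von_neumann_algebra C \<and> C \<subseteq> A \<and> id \<in> C \<and> (\<forall>x\<in>C. \<forall>y\<in>C. x \<circ> y = y \<circ> x)}"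

text \<open>Characters of C, represented as functions on all operators vanishing off C.
  The Gelfand (weak-*) topology is the subspace topology of the product (pointwise)
  topology on functions.\<close>
definition gelfand_spectrum :: "('h::chilbert_space \<Rightarrow> 'h) set \<Rightarrow> (('h \<Rightarrow> 'h) \<Rightarrow> complex) set" where
  "gelfand_spectrum C =
     {l. (\<forall>x\<in>C. \<forall>y\<in>C. l (\<lambda>z. x z + y z) = l x + l y \<and> l (x \<circ> y) = l x * l y) \<and>
         (\<forall>c. \<forall>x\<in>C. l (\<lambda>z. cscale c (x z)) = c * l x) \<and>
         l id = 1 \<and> (\<forall>x. x \<notin> C \<longrightarrow> l x = 0)}"

definition spectrum_top :: "('h::chilbert_space \<Rightarrow> 'h) set \<Rightarrow> (('h \<Rightarrow> 'h) \<Rightarrow> complex) topology" where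
  "spectrum_top C = subtopology euclidean (gelfand_spectrum C)"

definition restr :: "('h \<Rightarrow> 'h) set \<Rightarrow> (('h \<Rightarrow> 'h) \<Rightarrow> complex) \<Rightarrow> (('h \<Rightarrow> 'h) \<Rightarrow> complex)" where
  "restr D l = (\<lambda>x. if x \<in> D then l x else 0)"

definition Sigma_set :: "('h::chilbert_space \<Rightarrow> 'h) set \<Rightarrow> (('h \<Rightarrow> 'h) set \<times> (('h \<Rightarrow> 'h) \<Rightarrow> complex)) set" where
  "Sigma_set A = {(C, l). C \<in> abelian_subalgebras A \<and> l \<in> gelfand_spectrum C}"

definition slice :: "('c \<times> 'l) set \<Rightarrow> 'c \<Rightarrow> 'l set" where
  "slice U C = {l. (C, l) \<in> U}"

definition sigma_star_open :: "('h::chilbert_space \<Rightarrow> 'h) set \<Rightarrow> (('h \<Rightarrow> 'h) set \<times> (('h \<Rightarrow> 'h) \<Rightarrow> complex)) set \<Rightarrow> bool" where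
  "sigma_star_open A U \<longleftrightarrow>
     U \<subseteq> Sigma_set A \<and>
     (\<forall>C \<in> abelian_subalgebras A. openin (spectrum_top C) (slice U C)) \<and>
     (\<forall>C l D. (C, l) \<in> U \<longrightarrow> D \<in> abelian_subalgebras A \<longrightarrow> D \<subseteq> C \<longrightarrow> (D, restr D l) \<in> U)"

definition Sigma_star :: "('h::chilbert_space \<Rightarrow> 'h) set \<Rightarrow> (('h \<Rightarrow> 'h) set \<times> (('h \<Rightarrow> 'h) \<Rightarrow> complex)) topology" where
  "Sigma_star A = topology (sigma_star_open A)"

end

theory Submission
  imports Defs
begin

lemma bclI: "(\<And>x y. T (x + y) = T x + T y) \<Longrightarrow> (\<And>c x. T (cscale c x) = cscale c (T x))
  \<Longrightarrow> (\<And>x. norm (T x) \<le> norm x * K) \<Longrightarrow> bounded_clinear T"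
  unfolding bounded_clinear_def by blast

lemma bcl_addD: "bounded_clinear T \<Longrightarrow> T (x + y) = T x + T y"
  unfolding bounded_clinear_def by blast

lemma bcl_scaleD: "bounded_clinear T \<Longrightarrow> T (cscale c x) = cscale c (T x)"
  unfolding bounded_clinear_def by blast

lemma bcl_bound: "bounded_clinear T \<Longrightarrow> \<exists>K. \<forall>x. norm (T x) \<le> norm x * K"
  unfolding bounded_clinear_def by blast

lemma bcl_bound0: "bounded_clinear T \<Longrightarrow> \<exists>K\<ge>0. \<forall>x. norm (T x) \<le> norm x * K"
proof -
  assume "bounded_clinear T"
  then obtain K where K: "\<forall>x. norm (T x) \<le> norm x * K" by (blast dest: bcl_bound)
  have "norm (T x) \<le> norm x * max K 0" for x
  proof -
    have "norm (T x) \<le> norm x * K" using K by blast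
    also have "\<dots> \<le> norm x * max K 0" by (rule mult_left_mono) simp_all
    finally show ?thesis .
  qed
  then show ?thesis by (intro exI[of _ "max K 0"]) simp
qed

lemma norm_cscale: "norm (cscale c (v::'a::cinner_space)) = cmod c * norm v"
proof -
  have cv: "cnj (cinner v v) = cinner v v" by (rule cinner_conj_sym[symmetric])
  have "cinner (cscale c v) (cscale c v) = c * cinner (cscale c v) v"
    by (rule cinner_cscale_right)
  also have "cinner (cscale c v) v = cnj (cinner v (cscale c v))"
    by (rule cinner_conj_sym)
  also have "cinner v (cscale c v) = c * cinner v v" by (rule cinner_cscale_right)
  also have "cnj (c * cinner v v) = cnj c * cinner v v" by (simp only: complex_cnj_mult cv)
  finally have "cinner (cscale c v) (cscale c v) = (c * cnj c) * cinner v v"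
    by (simp only: mult.assoc)
  also have "c * cnj c = complex_of_real ((cmod c)\<^sup>2)" by (rule complex_norm_square[symmetric])
  finally have "Re (cinner (cscale c v) (cscale c v)) = (cmod c)\<^sup>2 * Re (cinner v v)"
    by simp
  then show ?thesis by (simp add: norm_eq_sqrt_cinner real_sqrt_mult)
qed

lemma bcl_add: "bounded_clinear x \<Longrightarrow> bounded_clinear y \<Longrightarrow> bounded_clinear (\<lambda>z. x z + y z)"
proof -
  assume x: "bounded_clinear x" and y: "bounded_clinear y"
  obtain K1 where K1: "\<forall>a. norm (x a) \<le> norm a * K1" using bcl_bound[OF x] by blast
  obtain K2 where K2: "\<forall>a. norm (y a) \<le> norm a * K2" using bcl_bound[OF y] by blast
  show ?thesis
  proof (rule bclI)
    fix a b show "x (a + b) + y (a + b) = (x a + y a) + (x b + y b)"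
      by (simp add: bcl_addD[OF x] bcl_addD[OF y] ac_simps)
  next
    fix c a show "x (cscale c a) + y (cscale c a) = cscale c (x a + y a)"
      by (simp add: bcl_scaleD[OF x] bcl_scaleD[OF y] cscale_add_right)
  next
    fix a
    have "norm (x a + y a) \<le> norm (x a) + norm (y a)" by (rule norm_triangle_ineq)
    also have "\<dots> \<le> norm a * K1 + norm a * K2" using K1 K2 by (intro add_mono) blast+
    also have "\<dots> = norm a * (K1 + K2)" by (simp add: distrib_left)
    finally show "norm (x a + y a) \<le> norm a * (K1 + K2)" .
  qed
qed

lemma bcl_comp: "bounded_clinear x \<Longrightarrow> bounded_clinear y \<Longrightarrow> bounded_clinear (x \<circ> y)"
proof -
  assume x: "bounded_clinear x" and y: "bounded_clinear y"
  obtain K1 where K1: "K1 \<ge> 0" "\<forall>a. norm (x a) \<le> norm a * K1" using bcl_bound0[OF x] by blast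
  obtain K2 where K2: "K2 \<ge> 0" "\<forall>a. norm (y a) \<le> norm a * K2" using bcl_bound0[OF y] by blast
  show ?thesis
  proof (rule bclI)
    fix a b show "(x \<circ> y) (a + b) = (x \<circ> y) a + (x \<circ> y) b"
      by (simp add: bcl_addD[OF x] bcl_addD[OF y])
  next
    fix c a show "(x \<circ> y) (cscale c a) = cscale c ((x \<circ> y) a)"
      by (simp add: bcl_scaleD[OF x] bcl_scaleD[OF y])
  next
    fix a
    have "norm (x (y a)) \<le> norm (y a) * K1" using K1 by blast
    also have "\<dots> \<le> norm a * K2 * K1" using K1 K2 by (intro mult_right_mono) blast+
    finally show "norm ((x \<circ> y) a) \<le> norm a * (K2 * K1)" by (simp add: mult.assoc)
  qed
qed

lemma bcl_scale: "bounded_clinear x \<Longrightarrow> bounded_clinear (\<lambda>z. cscale c (x z))"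
proof -
  assume x: "bounded_clinear x"
  obtain K1 where K1: "\<forall>a. norm (x a) \<le> norm a * K1" using bcl_bound[OF x] by blast
  show ?thesis
  proof (rule bclI)
    fix a b show "cscale c (x (a + b)) = cscale c (x a) + cscale c (x b)"
      by (simp add: bcl_addD[OF x] cscale_add_right)
  next
    fix d a
    have "cscale c (x (cscale d a)) = cscale c (cscale d (x a))" by (simp add: bcl_scaleD[OF x])
    also have "\<dots> = cscale (c * d) (x a)" by (rule cscale_cscale)
    also have "\<dots> = cscale (d * c) (x a)" by (simp only: mult.commute)
    also have "\<dots> = cscale d (cscale c (x a))" by (rule cscale_cscale[symmetric])
    finally show "cscale c (x (cscale d a)) = cscale d (cscale c (x a))" .
  next
    fix a
    have "norm (cscale c (x a)) = cmod c * norm (x a)" by (rule norm_cscale)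
    also have "\<dots> \<le> cmod c * (norm a * K1)" using K1 by (intro mult_left_mono) auto
    finally show "norm (cscale c (x a)) \<le> norm a * (cmod c * K1)" by (simp add: ac_simps)
  qed
qed

lemma comm_D: "x \<in> commutant S \<Longrightarrow> bounded_clinear x"
  unfolding commutant_def by simp

lemma comm_E: "x \<in> commutant S \<Longrightarrow> s \<in> S \<Longrightarrow> x (s a) = s (x a)"
proof -
  assume "x \<in> commutant S" "s \<in> S"
  then have "x \<circ> s = s \<circ> x" unfolding commutant_def by simp
  then show ?thesis by (metis comp_apply)
qed

lemma comm_I: "bounded_clinear x \<Longrightarrow> (\<And>s a. s \<in> S \<Longrightarrow> x (s a) = s (x a)) \<Longrightarrow> x \<in> commutant S"
  unfolding commutant_def by (simp add: fun_eq_iff)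

lemma comm_add:
  assumes S: "S \<subseteq> Collect bounded_clinear" and x: "x \<in> commutant S" and y: "y \<in> commutant S"
  shows "(\<lambda>z. x z + y z) \<in> commutant S"
proof (rule comm_I)
  show "bounded_clinear (\<lambda>z. x z + y z)" by (rule bcl_add[OF comm_D[OF x] comm_D[OF y]])
  fix s a assume s: "s \<in> S"
  have "bounded_clinear s" using S s by blast
  then have add: "s (x a + y a) = s (x a) + s (y a)" by (rule bcl_addD)
  show "x (s a) + y (s a) = s (x a + y a)"
    unfolding add comm_E[OF x s] comm_E[OF y s] ..
qed

lemma comm_comp:
  assumes x: "x \<in> commutant S" and y: "y \<in> commutant S"
  shows "x \<circ> y \<in> commutant S"
proof (rule comm_I)
  show "bounded_clinear (x \<circ> y)" by (rule bcl_comp[OF comm_D[OF x] comm_D[OF y]])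
  fix s a assume s: "s \<in> S"
  show "(x \<circ> y) (s a) = s ((x \<circ> y) a)"
    by (simp add: comm_E[OF x s] comm_E[OF y s])
qed

lemma comm_scale:
  assumes S: "S \<subseteq> Collect bounded_clinear" and x: "x \<in> commutant S"
  shows "(\<lambda>z. cscale c (x z)) \<in> commutant S"
proof (rule comm_I)
  show "bounded_clinear (\<lambda>z. cscale c (x z))" by (rule bcl_scale[OF comm_D[OF x]])
  fix s a assume s: "s \<in> S"
  have "bounded_clinear s" using S s by blast
  then have sc: "s (cscale c (x a)) = cscale c (s (x a))" by (rule bcl_scaleD)
  show "cscale c (x (s a)) = s (cscale c (x a))"
    unfolding sc comm_E[OF x s] ..
qed

lemma vna_closed:
  assumes "von_neumann_algebra D" "x \<in> D" "y \<in> D"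
  shows "(\<lambda>z. x z + y z) \<in> D" "x \<circ> y \<in> D" "(\<lambda>z. cscale c (x z)) \<in> D"
proof -
  have D: "D = commutant (commutant D)" using assms(1) unfolding von_neumann_algebra_def by auto
  have S: "commutant D \<subseteq> Collect bounded_clinear" unfolding commutant_def by auto
  show "(\<lambda>z. x z + y z) \<in> D" using comm_add[OF S] assms(2,3) D by metis
  show "x \<circ> y \<in> D" using comm_comp assms(2,3) D by metis
  show "(\<lambda>z. cscale c (x z)) \<in> D" using comm_scale[OF S] assms(2) D by metis
qed

lemma restr_spec:
  assumes "l \<in> gelfand_spectrum C" "D \<in> abelian_subalgebras A" "D \<subseteq> C"
  shows "restr D l \<in> gelfand_spectrum D"
proof -
  have v: "von_neumann_algebra D" "id \<in> D" using assms(2) unfolding abelian_subalgebras_def by auto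
  show ?thesis using assms(1,3) vna_closed[OF v(1)] v(2)
    unfolding gelfand_spectrum_def restr_def by (auto simp: subset_iff)
qed

lemma restr_restr: "C \<subseteq> D \<Longrightarrow> restr C (restr D l) = restr C l"
  unfolding restr_def by (auto simp: fun_eq_iff subset_iff)

lemma restr_self: "l \<in> gelfand_spectrum C \<Longrightarrow> restr C l = l"
  unfolding restr_def gelfand_spectrum_def by auto

lemma sso_sub: "sigma_star_open A U \<Longrightarrow> U \<subseteq> Sigma_set A"
  unfolding sigma_star_open_def by (rule conjunct1)

lemma sso_slice: "sigma_star_open A U \<Longrightarrow> C \<in> abelian_subalgebras A \<Longrightarrow> openin (spectrum_top C) (slice U C)"
  unfolding sigma_star_open_def by (drule conjunct2, drule conjunct1) (erule bspec)

lemma sso_down: "sigma_star_open A U \<Longrightarrow> (C, l) \<in> U \<Longrightarrow> D \<in> abelian_subalgebras A \<Longrightarrow> D \<subseteq> C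
  \<Longrightarrow> (D, restr D l) \<in> U"
  unfolding sigma_star_open_def by (drule conjunct2, drule conjunct2) (erule allE, erule allE, erule allE, erule impE, assumption, erule impE, assumption, erule impE, assumption, assumption)

lemma sso_intro: "U \<subseteq> Sigma_set A \<Longrightarrow> (\<And>C. C \<in> abelian_subalgebras A \<Longrightarrow> openin (spectrum_top C) (slice U C))
  \<Longrightarrow> (\<And>C l D. (C, l) \<in> U \<Longrightarrow> D \<in> abelian_subalgebras A \<Longrightarrow> D \<subseteq> C \<Longrightarrow> (D, restr D l) \<in> U)
  \<Longrightarrow> sigma_star_open A U"
  unfolding sigma_star_open_def by blast

lemma sigma_istop: "istopology (sigma_star_open A)"
  unfolding istopology_def
proof (intro conjI allI impI)
  fix S T assume S: "sigma_star_open A S" and T: "sigma_star_open A T"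
  have eq: "slice (S \<inter> T) C = slice S C \<inter> slice T C" for C unfolding slice_def by auto
  show "sigma_star_open A (S \<inter> T)"
  proof (rule sso_intro)
    show "S \<inter> T \<subseteq> Sigma_set A" using sso_sub[OF S] by blast
    fix C assume C: "C \<in> abelian_subalgebras A"
    show "openin (spectrum_top C) (slice (S \<inter> T) C)" unfolding eq
      by (rule openin_Int[OF sso_slice[OF S C] sso_slice[OF T C]])
  next
    fix C l D assume "(C, l) \<in> S \<inter> T" "D \<in> abelian_subalgebras A" "D \<subseteq> C"
    then show "(D, restr D l) \<in> S \<inter> T" using sso_down[OF S] sso_down[OF T] by blast
  qed
next
  fix K assume K: "\<forall>S\<in>K. sigma_star_open A S"
  have eq: "slice (\<Union>K) C = \<Union> ((\<lambda>S. slice S C) ` K)" for C unfolding slice_def by auto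
  show "sigma_star_open A (\<Union>K)"
  proof (rule sso_intro)
    show "\<Union>K \<subseteq> Sigma_set A" using K sso_sub by blast
  next
    fix C assume C: "C \<in> abelian_subalgebras A"
    show "openin (spectrum_top C) (slice (\<Union>K) C)" unfolding eq
    proof (rule openin_Union)
      fix X assume "X \<in> (\<lambda>S. slice S C) ` K"
      then obtain S where S: "S \<in> K" "X = slice S C" by blast
      then show "openin (spectrum_top C) X" using K sso_slice[OF _ C] by blast
    qed
  next
    fix C l D assume "(C, l) \<in> \<Union>K" "D \<in> abelian_subalgebras A" "D \<subseteq> C"
    then obtain S where S: "S \<in> K" "(C, l) \<in> S" "D \<in> abelian_subalgebras A" "D \<subseteq> C" by blast
    then have "(D, restr D l) \<in> S" using K sso_down by blast
    then show "(D, restr D l) \<in> \<Union>K" using S(1) by blast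
  qed
qed

lemma openin_SS: "openin (Sigma_star A) = sigma_star_open A"
  unfolding Sigma_star_def by (rule topology_inverse'[OF sigma_istop])

lemma slice_Sigma: "C \<in> abelian_subalgebras A \<Longrightarrow> slice (Sigma_set A) C = gelfand_spectrum C"
  unfolding slice_def Sigma_set_def by auto

lemma topspace_spec: "topspace (spectrum_top C) = gelfand_spectrum C"
  unfolding spectrum_top_def by simp

lemma Sigma_down: "(C, l) \<in> Sigma_set A \<Longrightarrow> D \<in> abelian_subalgebras A \<Longrightarrow> D \<subseteq> C \<Longrightarrow>
      (D, restr D l) \<in> Sigma_set A"
  unfolding Sigma_set_def by (auto intro: restr_spec)

lemma Sigma_open: "sigma_star_open A (Sigma_set A)"
proof (rule sso_intro)
  fix C assume "C \<in> abelian_subalgebras A"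
  then show "openin (spectrum_top C) (slice (Sigma_set A) C)"
    by (simp add: slice_Sigma spectrum_top_def)
next
  show "Sigma_set A \<subseteq> Sigma_set A" by (rule subset_refl)
next
  fix C l D assume "(C, l) \<in> Sigma_set A" "D \<in> abelian_subalgebras A" "D \<subseteq> C"
  then show "(D, restr D l) \<in> Sigma_set A" by (rule Sigma_down)
qed

lemma topspace_SS: "topspace (Sigma_star A) = Sigma_set A"
proof -
  have 1: "\<Union> (Collect (sigma_star_open A)) \<subseteq> Sigma_set A"
    by (rule Sup_least) (simp add: sso_sub)
  have 2: "Sigma_set A \<subseteq> \<Union> (Collect (sigma_star_open A))"
    by (rule Union_upper) (simp add: Sigma_open)
  have "topspace (Sigma_star A) = \<Union> (Collect (sigma_star_open A))"
    by (simp add: topspace_def openin_SS)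
  with 1 2 show ?thesis by (simp add: antisym)
qed

lemma closedin_SS: "closedin (Sigma_star A) F \<longleftrightarrow> F \<subseteq> Sigma_set A \<and>
  (\<forall>C\<in>abelian_subalgebras A. closedin (spectrum_top C) (slice F C)) \<and>
  (\<forall>C l D. (C, l) \<in> Sigma_set A \<longrightarrow> D \<in> abelian_subalgebras A \<longrightarrow> D \<subseteq> C \<longrightarrow>
      (D, restr D l) \<in> F \<longrightarrow> (C, l) \<in> F)"
proof -
  have sl: "slice (Sigma_set A - F) C = gelfand_spectrum C - slice F C"
    if "C \<in> abelian_subalgebras A" for C
    using slice_Sigma[OF that] unfolding slice_def by auto
  have cl: "closedin (spectrum_top C) X \<longleftrightarrow> openin (spectrum_top C) (gelfand_spectrum C - X)"
    if "X \<subseteq> gelfand_spectrum C" for C X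
    using that by (simp add: closedin_def topspace_spec)
  have sub: "F \<subseteq> Sigma_set A \<Longrightarrow> slice F C \<subseteq> gelfand_spectrum C" for C
    unfolding slice_def Sigma_set_def by auto
  have "closedin (Sigma_star A) F \<longleftrightarrow> F \<subseteq> Sigma_set A \<and> sigma_star_open A (Sigma_set A - F)"
    unfolding closedin_def topspace_SS openin_SS ..
  also have "\<dots> \<longleftrightarrow> F \<subseteq> Sigma_set A \<and>
  (\<forall>C\<in>abelian_subalgebras A. closedin (spectrum_top C) (slice F C)) \<and>
  (\<forall>C l D. (C, l) \<in> Sigma_set A \<longrightarrow> D \<in> abelian_subalgebras A \<longrightarrow> D \<subseteq> C \<longrightarrow>
      (D, restr D l) \<in> F \<longrightarrow> (C, l) \<in> F)"
  proof (intro iffI conjI ballI allI impI)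
    assume H: "F \<subseteq> Sigma_set A \<and> sigma_star_open A (Sigma_set A - F)"
    then have Fs: "F \<subseteq> Sigma_set A" and O: "sigma_star_open A (Sigma_set A - F)" by auto
    show "F \<subseteq> Sigma_set A" by (rule Fs)
    {
      fix C assume C: "C \<in> abelian_subalgebras A"
      have "openin (spectrum_top C) (slice (Sigma_set A - F) C)"
        by (rule sso_slice[OF O C])
      then show "closedin (spectrum_top C) (slice F C)"
        unfolding cl[OF sub[OF Fs]] sl[OF C] .
    }
    fix C l D
    assume a: "(C, l) \<in> Sigma_set A" "D \<in> abelian_subalgebras A" "D \<subseteq> C" "(D, restr D l) \<in> F"
    show "(C, l) \<in> F"
    proof (rule ccontr)
      assume "(C, l) \<notin> F"
      then have "(C, l) \<in> Sigma_set A - F" using a(1) by (rule DiffI[rotated])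
      then have "(D, restr D l) \<in> Sigma_set A - F"
        by (rule sso_down[OF O _ a(2) a(3)])
      then show False using a(4) by blast
    qed
  next
    assume H: "F \<subseteq> Sigma_set A \<and>
      (\<forall>C\<in>abelian_subalgebras A. closedin (spectrum_top C) (slice F C)) \<and>
      (\<forall>C l D. (C, l) \<in> Sigma_set A \<longrightarrow> D \<in> abelian_subalgebras A \<longrightarrow> D \<subseteq> C \<longrightarrow>
      (D, restr D l) \<in> F \<longrightarrow> (C, l) \<in> F)"
    have Fs: "F \<subseteq> Sigma_set A" using H by (rule conjunct1)
    have Cl0: "\<forall>C\<in>abelian_subalgebras A. closedin (spectrum_top C) (slice F C)"
      using H by (rule conjunct2[THEN conjunct1])
    have Cl: "closedin (spectrum_top C) (slice F C)" if "C\<in>abelian_subalgebras A" for C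
      using Cl0 that by (rule bspec)
    note up = conjunct2[OF conjunct2[OF H], rule_format]
    show "F \<subseteq> Sigma_set A" by (rule Fs)
    show "sigma_star_open A (Sigma_set A - F)"
    proof (rule sso_intro)
      fix C assume C: "C \<in> abelian_subalgebras A"
      show "openin (spectrum_top C) (slice (Sigma_set A - F) C)"
        unfolding sl[OF C] cl[OF sub[OF Fs], symmetric] by (rule Cl[OF C])
    next
      fix C l D assume a: "(C, l) \<in> Sigma_set A - F" "D \<in> abelian_subalgebras A" "D \<subseteq> C"
      have "(D, restr D l) \<in> Sigma_set A" using a Sigma_down by blast
      moreover have "(D, restr D l) \<notin> F"
      proof
        assume "(D, restr D l) \<in> F"
        then have "(C, l) \<in> F" using a by (intro up[of C l D]) auto
        then show False using a(1) by blast
      qed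
      ultimately show "(D, restr D l) \<in> Sigma_set A - F" by blast
    qed blast
  qed
  finally show ?thesis .
qed

lemma cSS_sub: "closedin (Sigma_star A) F \<Longrightarrow> F \<subseteq> Sigma_set A"
  unfolding closedin_SS by (rule conjunct1)

lemma cSS_slice: "closedin (Sigma_star A) F \<Longrightarrow> C \<in> abelian_subalgebras A \<Longrightarrow>
  closedin (spectrum_top C) (slice F C)"
  unfolding closedin_SS by (drule conjunct2, drule conjunct1) (erule bspec)

lemma cSS_up:
  assumes "closedin (Sigma_star A) F" "(C, l) \<in> Sigma_set A" "D \<in> abelian_subalgebras A" "D \<subseteq> C"
    "(D, restr D l) \<in> F"
  shows "(C, l) \<in> F"
proof -
  have "\<forall>C l D. (C, l) \<in> Sigma_set A \<longrightarrow> D \<in> abelian_subalgebras A \<longrightarrow> D \<subseteq> C \<longrightarrow>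
      (D, restr D l) \<in> F \<longrightarrow> (C, l) \<in> F"
    using assms(1) unfolding closedin_SS by (rule conjunct2[THEN conjunct2])
  from this[rule_format, OF assms(2-5)] show ?thesis .
qed

lemma restr_cont: "continuous_on UNIV (restr C)"
proof -
  have "continuous_on UNIV (\<lambda>l. restr C l i)" for i
  proof (cases "i \<in> C")
    case True
    then show ?thesis unfolding restr_def by simp
  next
    case False
    then show ?thesis unfolding restr_def by simp
  qed
  then show ?thesis by (rule continuous_on_coordinatewise_then_product)
qed

lemma R_closed:
  assumes C: "C \<in> abelian_subalgebras A" and T: "closed T"
  shows "closedin (Sigma_star A) {p \<in> Sigma_set A. C \<subseteq> fst p \<and> restr C (snd p) \<in> T}"
    (is "closedin _ ?R")
  unfolding closedin_SS
proof (intro conjI ballI allI impI)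
  show "?R \<subseteq> Sigma_set A" by blast
next
  fix D assume D: "D \<in> abelian_subalgebras A"
  show "closedin (spectrum_top D) (slice ?R D)"
  proof (cases "C \<subseteq> D")
    case True
    have eq: "slice ?R D = gelfand_spectrum D \<inter> (restr C -` T)"
      unfolding slice_def using D True by (auto simp: Sigma_set_def)
    have "closed (restr C -` T)" by (rule closed_vimage[OF T restr_cont])
    then show ?thesis unfolding eq spectrum_top_def closedin_closed by blast
  next
    case False
    then have "slice ?R D = {}" unfolding slice_def by auto
    then show ?thesis by simp
  qed
next
  fix E l D assume a: "(E, l) \<in> Sigma_set A" "D \<in> abelian_subalgebras A" "D \<subseteq> E"
    "(D, restr D l) \<in> ?R"
  then have "C \<subseteq> D" "restr C (restr D l) \<in> T" by auto
  then have "C \<subseteq> E" "restr C l \<in> T" using a(3) restr_restr[of C D l] by auto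
  then show "(E, l) \<in> ?R" using a(1) by simp
qed

lemma Vc_open:
  assumes C: "C \<in> abelian_subalgebras A"
  shows "openin (Sigma_star A) {p \<in> Sigma_set A. fst p \<subseteq> C}" (is "openin _ ?V")
  unfolding openin_SS
proof (rule sso_intro)
  show "?V \<subseteq> Sigma_set A" by blast
next
  fix E assume E: "E \<in> abelian_subalgebras A"
  show "openin (spectrum_top E) (slice ?V E)"
  proof (cases "E \<subseteq> C")
    case True
    then have "slice ?V E = topspace (spectrum_top E)"
      unfolding topspace_spec slice_def using E by (auto simp: Sigma_set_def)
    then show ?thesis by simp
  next
    case False
    then have "slice ?V E = {}" unfolding slice_def by auto
    then show ?thesis by simp
  qed
next
  fix E l D assume a: "(E, l) \<in> ?V" "D \<in> abelian_subalgebras A" "D \<subseteq> E"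
  then have "(D, restr D l) \<in> Sigma_set A" using Sigma_down by auto
  then show "(D, restr D l) \<in> ?V" using a by auto
qed

theorem lemma2p26:
  fixes A :: "('h::chilbert_space \<Rightarrow> 'h) set"
    and F :: "(('h \<Rightarrow> 'h) set \<times> (('h \<Rightarrow> 'h) \<Rightarrow> complex)) set"
    and C :: "('h \<Rightarrow> 'h) set"
  assumes "von_neumann_algebra A"
    and "closedin (Sigma_star A) F"
    and "\<forall>F1 F2. closedin (Sigma_star A) F1 \<longrightarrow> closedin (Sigma_star A) F2 \<longrightarrow>
           F = F1 \<union> F2 \<longrightarrow> F = F1 \<or> F = F2"
    and "C \<in> abelian_subalgebras A"
    and "slice F C \<noteq> {}"
    and "\<forall>D \<in> abelian_subalgebras A. D \<subset> C \<longrightarrow> slice F D = {}"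
  shows "\<exists>!l. l \<in> gelfand_spectrum C \<and> F = (Sigma_star A) closure_of {(C, l)}"
proof -
  note Fcl = assms(2)
  note irr = assms(3)
  note C = assms(4)
  have Fsub: "F \<subseteq> Sigma_set A" by (rule cSS_sub[OF Fcl])
  have Fsl: "closedin (spectrum_top C) (slice F C)" by (rule cSS_slice[OF Fcl C])
  obtain l0 where l0: "(C, l0) \<in> F" using assms(5) unfolding slice_def by auto
  have l0s: "l0 \<in> gelfand_spectrum C" using l0 Fsub unfolding Sigma_set_def by auto
  obtain T0 where T0: "closed T0" "slice F C = gelfand_spectrum C \<inter> T0"
    using Fsl unfolding spectrum_top_def closedin_closed by blast
  define R where "R T = {p \<in> Sigma_set A. C \<subseteq> fst p \<and> restr C (snd p) \<in> T}" for T
  define Vc where "Vc = {p \<in> Sigma_set A. fst p \<subseteq> C}"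
  have Rcl: "closed T \<Longrightarrow> closedin (Sigma_star A) (F \<inter> R T)" for T
    unfolding R_def by (rule closedin_Int[OF Fcl R_closed[OF C]])
  have Vcl: "closedin (Sigma_star A) (F - Vc)"
    unfolding Vc_def by (rule closedin_diff[OF Fcl Vc_open[OF C]])
  have split1: "F = (F \<inter> R T0) \<union> (F - Vc)"
  proof (rule antisym)
    show "F \<subseteq> (F \<inter> R T0) \<union> (F - Vc)"
    proof
      fix p assume p: "p \<in> F"
      obtain E \<nu> where pe: "p = (E, \<nu>)" by (cases p)
      show "p \<in> (F \<inter> R T0) \<union> (F - Vc)"
      proof (cases "p \<in> Vc")
        case True
        then have E: "E \<in> abelian_subalgebras A" "E \<subseteq> C" "\<nu> \<in> gelfand_spectrum E"
          unfolding Vc_def Sigma_set_def pe by auto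
        have "\<nu> \<in> slice F E" using p pe unfolding slice_def by auto
        then have "\<not> E \<subset> C" using assms(6) E(1) by blast
        then have EC: "E = C" using E(2) by blast
        have "\<nu> \<in> slice F C" using p pe EC unfolding slice_def by auto
        then have "restr C \<nu> \<in> T0" using T0(2) EC restr_self[OF E(3)] by auto
        then show ?thesis using p pe EC Fsub unfolding R_def by auto
      next
        case False
        then show ?thesis using p by blast
      qed
    qed
  qed blast
  have "F \<noteq> F - Vc" using l0 Fsub unfolding Vc_def by auto
  then have "F = F \<inter> R T0" using irr Rcl[OF T0(1)] Vcl split1 by blast
  then have hF: "\<And>D \<mu>. (D, \<mu>) \<in> F \<Longrightarrow> C \<subseteq> D \<and> restr C \<mu> \<in> slice F C"
  proof -
    fix D \<mu> assume a: "F = F \<inter> R T0" "(D, \<mu>) \<in> F"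
    have "(D, \<mu>) \<in> F \<inter> R T0" using a(2) by (subst a(1)[symmetric])
    then have b: "C \<subseteq> D" "restr C \<mu> \<in> T0" "(D, \<mu>) \<in> Sigma_set A" unfolding R_def by auto
    then have "restr C \<mu> \<in> gelfand_spectrum C"
      using C by (auto simp: Sigma_set_def intro: restr_spec)
    then show "C \<subseteq> D \<and> restr C \<mu> \<in> slice F C" using b T0(2) by auto
  qed
  have single: "slice F C = {l0}"
  proof (rule ccontr)
    assume "slice F C \<noteq> {l0}"
    moreover have "l0 \<in> slice F C" using l0 unfolding slice_def by auto
    ultimately obtain l1 where l1: "l1 \<in> slice F C" "l1 \<noteq> l0" by blast
    then obtain x where x: "l1 x \<noteq> l0 x" by (meson ext)
    define r where "r = dist (l0 x) (l1 x) / 2"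
    have r: "r > 0" using x unfolding r_def by simp
    define T1 where "T1 = {l::(('h \<Rightarrow> 'h) \<Rightarrow> complex). r \<le> dist (l x) (l1 x)}"
    define T2 where "T2 = {l::(('h \<Rightarrow> 'h) \<Rightarrow> complex). r \<le> dist (l x) (l0 x)}"
    have cx: "continuous_on UNIV (\<lambda>l::(('h \<Rightarrow> 'h) \<Rightarrow> complex). l x)" by simp
    have cT1: "closed T1" unfolding T1_def
      by (rule closed_Collect_le[OF continuous_on_const continuous_on_dist[OF cx continuous_on_const]])
    have cT2: "closed T2" unfolding T2_def
      by (rule closed_Collect_le[OF continuous_on_const continuous_on_dist[OF cx continuous_on_const]])
    have cover: "l \<in> T1 \<or> l \<in> T2" for l
    proof (rule ccontr)
      assume "\<not> (l \<in> T1 \<or> l \<in> T2)"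
      then have "dist (l x) (l1 x) < r" "dist (l x) (l0 x) < r" unfolding T1_def T2_def by auto
      moreover have "dist (l0 x) (l1 x) \<le> dist (l x) (l0 x) + dist (l x) (l1 x)"
        by (rule dist_triangle3)
      ultimately show False unfolding r_def by simp
    qed
    have "F = (F \<inter> R T1) \<union> (F \<inter> R T2)"
    proof (rule antisym)
      show "F \<subseteq> (F \<inter> R T1) \<union> (F \<inter> R T2)"
      proof
        fix p assume p: "p \<in> F"
        obtain D \<mu> where pe: "p = (D, \<mu>)" by (cases p)
        have "C \<subseteq> D" using hF p pe by blast
        then show "p \<in> (F \<inter> R T1) \<union> (F \<inter> R T2)"
          using cover[of "restr C \<mu>"] p pe Fsub unfolding R_def by auto
      qed
    qed blast
    then have "F = F \<inter> R T1 \<or> F = F \<inter> R T2" using irr Rcl[OF cT1] Rcl[OF cT2] by blast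
    moreover have "(C, l1) \<in> F" using l1 unfolding slice_def by auto
    moreover have "l1 \<in> gelfand_spectrum C" using l1 T0(2) by auto
    then have "(C, l1) \<notin> R T1" using r unfolding R_def T1_def by (auto simp: restr_self)
    moreover have "(C, l0) \<notin> R T2" using r l0s unfolding R_def T2_def by (auto simp: restr_self)
    ultimately show False using l0 by blast
  qed
  let ?cl = "(Sigma_star A) closure_of {(C, l0)}"
  have top: "(C, l0) \<in> topspace (Sigma_star A)" using l0 Fsub topspace_SS by blast
  have inc: "{(C, l0)} \<subseteq> ?cl" by (rule closure_of_subset) (use top in simp)
  have "?cl \<subseteq> F" by (rule closure_of_minimal) (use l0 Fcl in auto)
  moreover have "F \<subseteq> ?cl"
  proof
    fix p assume p: "p \<in> F"
    obtain D \<mu> where pe: "p = (D, \<mu>)" by (cases p)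
    have a: "C \<subseteq> D" "restr C \<mu> = l0" using hF p pe single by auto
    have "(C, restr C \<mu>) \<in> ?cl" using inc a by simp
    moreover have "closedin (Sigma_star A) ?cl" by simp
    ultimately have "(D, \<mu>) \<in> ?cl" using p pe Fsub a(1) C by (intro cSS_up[of A ?cl D \<mu> C]) auto
    then show "p \<in> ?cl" using pe by simp
  qed
  ultimately have eq: "F = ?cl" by blast
  show ?thesis
  proof (rule ex1I[of _ l0])
    show "l0 \<in> gelfand_spectrum C \<and> F = ?cl" using l0s eq by simp
  next
    fix l assume a: "l \<in> gelfand_spectrum C \<and> F = (Sigma_star A) closure_of {(C, l)}"
    then have "(C, l) \<in> topspace (Sigma_star A)" using C topspace_SS unfolding Sigma_set_def by auto
    then have "(C, l) \<in> F" using a closure_of_subset[of "{(C, l)}" "Sigma_star A"] by auto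
    then have "l \<in> slice F C" unfolding slice_def by auto
    then show "l = l0" using single by auto
  qed
qed

end
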